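(* Let $X$ be a finite simple connected graph and $u,v \in V(X)$. If $u$ and $v$ are antipodal vertices, then $u$ and $v$ are spectrally extremal vertices and they are strongly cospectral. Conversely, if $u$ is spectrally extremal, $u$ and $v$ are strongly cospectral, and $d(u,v) = \varepsilon_u$, then $u$ and $v$ are antipodal vertices.
   Context: $A$ is the adjacency matrix of $X$ with spectral decomposition $A = \sum_r \theta_r E_r$ ($\theta_r$ distinct eigenvalues, $E_r$ orthogonal projections onto eigenspaces); $e_w$ is the standard basis vector of $w$. Eigenvalue support: $\Phi_u = \{\theta_r : E_r e_u \ne 0\}$; dual degree $d^*(u) = |\Phi_u|-1$; eccentricity $\varepsilon_u = \max_w d(u,w)$; $u$ is spectrally extremal if $\varepsilon_u = d^*(u)$ (in general $\varepsilon_u \le d^*(u)$). Vertices $u,v$ are cospectral if $X\setminus u$ and $X\setminus v$ have the same adjacency spectrum (equivalently $(E_r)_{u,u}=(E_r)_{v,v}$ for all $r$), and strongly cospectral if $E_r e_u = \pm E_r e_v$ for all $r$. Let $\varphi$ be the positive eigenvector of $A$ for its largest eigenvalue and $D = \mathrm{diag}(\varphi)$. A partition of $V(X)$ is pseudo equitable if for each class $C$ and each vertex $x$, the sum $\sum_{y \in C} (D^{-1}AD)_{x,y}$ depends only on the class containing $x$. The distance partition of $u$ is the partition of $V(X)$ into the sets $\{w : d(u,w) = i\}$. Vertices $u$ and $v$ are antipodal if: there is a pseudo equitable partition that is simultaneously the distance partition of $u$ and the distance partition of $v$; $\{u\}$ and $\{v\}$ are singleton classes of this partition at maximum distance from each other;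 and $u$ and $v$ are cospectral. *)

theory Defs
  imports "HOL-Analysis.Analysis"
begin

definition simple_graph :: "('n::finite \<Rightarrow> 'n \<Rightarrow> bool) \<Rightarrow> bool" where
  "simple_graph adj \<longleftrightarrow> (\<forall>x y. adj x y \<longrightarrow> adj y x) \<and> (\<forall>x. \<not> adj x x)"

definition connected_graph :: "('n::finite \<Rightarrow> 'n \<Rightarrow> bool) \<Rightarrow> bool" where
  "connected_graph adj \<longleftrightarrow> (\<forall>u w. \<exists>n. (adj ^^ n) u w)"

definition gdist :: "('n::finite \<Rightarrow> 'n \<Rightarrow> bool) \<Rightarrow> 'n \<Rightarrow> 'n \<Rightarrow> nat" where
  "gdist adj u w = (LEAST n. (adj ^^ n) u w)"

definition ecc :: "('n::finite \<Rightarrow> 'n \<Rightarrow> bool) \<Rightarrow> 'n \<Rightarrow> nat" where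
  "ecc adj u = Max (range (gdist adj u))"

definition adj_matrix :: "('n::finite \<Rightarrow> 'n \<Rightarrow> bool) \<Rightarrow> real^'n^'n" where
  "adj_matrix adj = (\<chi> i j. if adj i j then 1 else 0)"

definition eigenvalue :: "('n::finite \<Rightarrow> 'n \<Rightarrow> bool) \<Rightarrow> real \<Rightarrow> bool" where
  "eigenvalue adj \<theta> \<longleftrightarrow> (\<exists>x. x \<noteq> 0 \<and> adj_matrix adj *v x = \<theta> *\<^sub>R x)"

definition eigenspace :: "('n::finite \<Rightarrow> 'n \<Rightarrow> bool) \<Rightarrow> real \<Rightarrow> (real^'n) set" where
  "eigenspace adj \<theta> = {x. adj_matrix adj *v x = \<theta> *\<^sub>R x}"

definition eproj :: "('n::finite \<Rightarrow> 'n \<Rightarrow> bool) \<Rightarrow> real \<Rightarrow> real^'n^'n" where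
  "eproj adj \<theta> = (THE P. P ** P = P \<and> transpose P = P \<and>
                        range (\<lambda>x. P *v x) = eigenspace adj \<theta>)"

definition evec :: "'n::finite \<Rightarrow> real^'n" where
  "evec w = axis w 1"

definition eig_support :: "('n::finite \<Rightarrow> 'n \<Rightarrow> bool) \<Rightarrow> 'n \<Rightarrow> real set" where
  "eig_support adj u = {\<theta>. eigenvalue adj \<theta> \<and> eproj adj \<theta> *v evec u \<noteq> 0}"

definition dual_degree :: "('n::finite \<Rightarrow> 'n \<Rightarrow> bool) \<Rightarrow> 'n \<Rightarrow> nat" where
  "dual_degree adj u = card (eig_support adj u) - 1"

definition spectrally_extremal :: "('n::finite \<Rightarrow> 'n \<Rightarrow> bool) \<Rightarrow> 'n \<Rightarrow> bool" where
  "spectrally_extremal adj u \<longleftrightarrow> ecc adj u = dual_degree adj u"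

definition cospectral :: "('n::finite \<Rightarrow> 'n \<Rightarrow> bool) \<Rightarrow> 'n \<Rightarrow> 'n \<Rightarrow> bool" where
  "cospectral adj u v \<longleftrightarrow>
     (\<forall>\<theta>. eigenvalue adj \<theta> \<longrightarrow> eproj adj \<theta> $ u $ u = eproj adj \<theta> $ v $ v)"

definition strongly_cospectral :: "('n::finite \<Rightarrow> 'n \<Rightarrow> bool) \<Rightarrow> 'n \<Rightarrow> 'n \<Rightarrow> bool" where
  "strongly_cospectral adj u v \<longleftrightarrow>
     (\<forall>\<theta>. eigenvalue adj \<theta> \<longrightarrow>
        eproj adj \<theta> *v evec u = eproj adj \<theta> *v evec v \<or>
        eproj adj \<theta> *v evec u = - (eproj adj \<theta> *v evec v))"

definition perron_vec :: "('n::finite \<Rightarrow> 'n \<Rightarrow> bool) \<Rightarrow> real^'n" where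
  "perron_vec adj = (SOME \<phi>. (\<forall>i. \<phi> $ i > 0) \<and>
      adj_matrix adj *v \<phi> = Max {\<theta>. eigenvalue adj \<theta>} *\<^sub>R \<phi>)"

text \<open>Entries of D^-1 A D with D = diag(\<phi>).\<close>
definition scaled_adj :: "('n::finite \<Rightarrow> 'n \<Rightarrow> bool) \<Rightarrow> 'n \<Rightarrow> 'n \<Rightarrow> real" where
  "scaled_adj adj x y = adj_matrix adj $ x $ y * perron_vec adj $ y / perron_vec adj $ x"

definition is_partition :: "'n set set \<Rightarrow> bool" where
  "is_partition P \<longleftrightarrow> \<Union>P = UNIV \<and> {} \<notin> P \<and>
     (\<forall>C\<in>P. \<forall>C'\<in>P. C \<noteq> C' \<longrightarrow> C \<inter> C' = {})"

definition pseudo_equitable :: "('n::finite \<Rightarrow> 'n \<Rightarrow> bool) \<Rightarrow> 'n set set \<Rightarrow> bool" where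
  "pseudo_equitable adj P \<longleftrightarrow> is_partition P \<and>
     (\<forall>C\<in>P. \<forall>C'\<in>P. \<forall>x\<in>C'. \<forall>x'\<in>C'.
        (\<Sum>y\<in>C. scaled_adj adj x y) = (\<Sum>y\<in>C. scaled_adj adj x' y))"

definition distance_partition :: "('n::finite \<Rightarrow> 'n \<Rightarrow> bool) \<Rightarrow> 'n \<Rightarrow> 'n set set" where
  "distance_partition adj u = (\<lambda>i. {w. gdist adj u w = i}) ` range (gdist adj u)"

definition antipodal :: "('n::finite \<Rightarrow> 'n \<Rightarrow> bool) \<Rightarrow> 'n \<Rightarrow> 'n \<Rightarrow> bool" where
  "antipodal adj u v \<longleftrightarrow>
     (\<exists>P. pseudo_equitable adj P \<and> P = distance_partition adj u \<and>
          P = distance_partition adj v \<and> {u} \<in> P \<and> {v} \<in> P \<and>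
          gdist adj u v = ecc adj u) \<and>
     cospectral adj u v"

end

theory Submission
  imports Defs "HOL-Computational_Algebra.Polynomial"
begin

lemma sym_matrix_inner:
  fixes P :: "real^'n^'n"
  assumes "transpose P = P"
  shows "(P *v x) \<bullet> y = x \<bullet> (P *v y)"
  by (metis assms dot_lmul_matrix transpose_matrix_vector)

lemma inner_sym_matrix:
  fixes P :: "real^'n^'n"
  assumes "\<And>x y. (P *v x) \<bullet> y = x \<bullet> (P *v y)"
  shows "transpose P = P"
proof -
  have "transpose P *v x = P *v x" for x
  proof -
    have "\<forall>y. (transpose P *v x - P *v x) \<bullet> y = 0"
      by (simp add: inner_diff_left dot_lmul_matrix assms)
    then show ?thesis by (metis eq_iff_diff_eq_0 inner_eq_zero_iff)
  qed
  then show ?thesis by (simp add: matrix_eq)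
qed

lemma proj_unique:
  fixes P Q :: "real^'n^'n"
  assumes P: "P ** P = P" "transpose P = P" and Q: "Q ** Q = Q" "transpose Q = Q"
    and R: "range (\<lambda>x. P *v x) = range (\<lambda>x. Q *v x)"
  shows "P = Q"
proof -
  have sub: "subspace (range (\<lambda>x. P *v x))"
    by (metis linear_subspace_image matrix_vector_mul_linear subspace_UNIV)
  have keyP: "x \<bullet> r = (P *v x) \<bullet> r" if rr: "r \<in> range (\<lambda>x. P *v x)" for x r
  proof -
    obtain z where z: "r = P *v z" using rr by blast
    have "(P *v x) \<bullet> (P *v z) = x \<bullet> (P *v (P *v z))" using sym_matrix_inner[OF P(2)] by simp
    also have "\<dots> = x \<bullet> (P *v z)" by (simp add: matrix_vector_mul_assoc P(1))
    finally show ?thesis using z by simp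
  qed
  have keyQ: "x \<bullet> r = (Q *v x) \<bullet> r" if rr: "r \<in> range (\<lambda>x. Q *v x)" for x r
  proof -
    obtain z where z: "r = Q *v z" using rr by blast
    have "(Q *v x) \<bullet> (Q *v z) = x \<bullet> (Q *v (Q *v z))" using sym_matrix_inner[OF Q(2)] by simp
    also have "\<dots> = x \<bullet> (Q *v z)" by (simp add: matrix_vector_mul_assoc Q(1))
    finally show ?thesis using z by simp
  qed
  have "P *v x = Q *v x" for x
  proof -
    let ?d = "P *v x - Q *v x"
    have d: "?d \<in> range (\<lambda>x. P *v x)"
      using R sub by (metis rangeI subspace_diff)
    have "?d \<bullet> ?d = 0"
      using keyP[OF d, of x] keyQ[of ?d x] d R by (simp add: inner_diff_left)
    then show ?thesis by simp
  qed
  then show ?thesis by (simp add: matrix_eq)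
qed

lemma proj_exists:
  fixes S :: "(real^'n) set"
  assumes "subspace S"
  shows "\<exists>P. P ** P = P \<and> transpose P = P \<and> range (\<lambda>x. P *v x) = S"
proof -
  obtain B where B: "B \<subseteq> S" "pairwise orthogonal B" "\<And>x. x \<in> B \<Longrightarrow> norm x = 1"
     "independent B" "card B = dim S" "span B = S"
    using orthonormal_basis_subspace[OF assms] by metis
  have fin: "finite B" using B(4) independent_imp_finite by blast
  define f where "f x = (\<Sum>b\<in>B. (b \<bullet> x) *\<^sub>R b)" for x
  have lin: "linear f" unfolding f_def
    by (intro linearI) (auto simp: inner_add_right scaleR_add_left sum.distrib scaleR_sum_right inner_scaleR_right)
  define P where "P = matrix f"
  have Pf: "P *v x = f x" for x using lin by (simp add: P_def matrix_works)
  have bb: "b \<bullet> b' = (if b = b' then 1 else 0)" if "b \<in> B" "b' \<in> B" for b b'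
    using B(2,3) that by (auto simp: pairwise_def orthogonal_def norm_eq_1)
  have bf: "b \<bullet> f x = b \<bullet> x" if "b \<in> B" for b x
  proof -
    have "b \<bullet> f x = (\<Sum>b'\<in>B. (b' \<bullet> x) * (b \<bullet> b'))"
      by (simp add: f_def inner_sum_right)
    also have "\<dots> = (\<Sum>b'\<in>B. if b' = b then b \<bullet> x else 0)"
      by (rule sum.cong) (use bb that in \<open>auto simp: inner_commute\<close>)
    also have "\<dots> = b \<bullet> x" using fin that by simp
    finally show ?thesis .
  qed
  have ff: "f (f x) = f x" for x unfolding f_def[of "f x"] using bf by (simp add: f_def)
  have fS: "f x \<in> S" for x
  proof -
    have "f x \<in> span B" unfolding f_def by (intro span_sum span_scale span_base)
    then show ?thesis using B(6) by simp
  qed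
  have fid: "f s = s" if "s \<in> S" for s
  proof -
    have "\<forall>b\<in>B. b \<bullet> (s - f s) = 0" using bf by (simp add: inner_diff_right)
    then have "\<forall>b\<in>B. orthogonal (s - f s) b" by (simp add: orthogonal_def inner_commute)
    then have "\<forall>y\<in>span B. orthogonal (s - f s) y"
      using orthogonal_to_span by blast
    then have "\<forall>y\<in>span B. (s - f s) \<bullet> y = 0" by (simp add: orthogonal_def)
    moreover have "s - f s \<in> span B" by (rule span_diff) (use B(6) that fS in auto)
    ultimately have "(s - f s) \<bullet> (s - f s) = 0" by blast
    then show ?thesis by simp
  qed
  have "P ** P = P" by (simp add: matrix_eq Pf ff flip: matrix_vector_mul_assoc)
  moreover have "transpose P = P"
  proof (rule inner_sym_matrix)
    fix x y
    show "(P *v x) \<bullet> y = x \<bullet> (P *v y)"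
      by (simp add: Pf f_def inner_sum_left inner_sum_right mult.commute inner_commute)
  qed
  moreover have "range (\<lambda>x. P *v x) = S" using fS fid Pf by (metis image_subset_iff rangeI subsetI subset_antisym)
  ultimately show ?thesis by blast
qed

lemma inner_ext:
  fixes a b :: "real^'n"
  assumes "\<And>y. a \<bullet> y = b \<bullet> y"
  shows "a = b"
proof -
  have "(a - b) \<bullet> (a - b) = 0" using assms[of "a - b"] by (simp add: inner_diff_left)
  then show ?thesis by simp
qed

locale sg =
  fixes adj :: "'n::finite \<Rightarrow> 'n \<Rightarrow> bool"
  assumes sg: "simple_graph adj" and cg: "connected_graph adj"
begin

abbreviation AA where "AA \<equiv> adj_matrix adj"
abbreviation EE where "EE \<theta> \<equiv> eproj adj \<theta>"
abbreviation EV where "EV \<equiv> {\<theta>. eigenvalue adj \<theta>}"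

lemma adj_sym: "adj x y = adj y x" using sg unfolding simple_graph_def by blast

lemma A_T: "transpose AA = AA"
  by (simp add: vec_eq_iff transpose_def adj_matrix_def adj_sym)

lemma A_inner: "(AA *v x) \<bullet> y = x \<bullet> (AA *v y)"
  using sym_matrix_inner[OF A_T] .

lemma Av: "(AA *v x) $ i = (\<Sum>j\<in>UNIV. if adj i j then x $ j else 0)"
  unfolding matrix_vector_mult_def adj_matrix_def by (auto intro!: sum.cong)

lemma eigsp_sub: "subspace (eigenspace adj \<theta>)"
  unfolding subspace_def eigenspace_def
  by (auto simp: matrix_vector_right_distrib matrix_vector_mult_scaleR scaleR_add_right)

lemma E_props: "EE \<theta> ** EE \<theta> = EE \<theta> \<and> transpose (EE \<theta>) = EE \<theta> \<and>
     range (\<lambda>x. EE \<theta> *v x) = eigenspace adj \<theta>"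
proof -
  obtain P where P: "P ** P = P" "transpose P = P" "range (\<lambda>x. P *v x) = eigenspace adj \<theta>"
    using proj_exists[OF eigsp_sub] by blast
  have "\<exists>!P. P ** P = P \<and> transpose P = P \<and> range (\<lambda>x. P *v x) = eigenspace adj \<theta>"
  proof (rule ex1I[of _ P])
    fix Q assume "Q ** Q = Q \<and> transpose Q = Q \<and> range (\<lambda>x. Q *v x) = eigenspace adj \<theta>"
    then show "Q = P" using proj_unique[of Q P] P by metis
  qed (use P in blast)
  then show ?thesis unfolding eproj_def by (rule theI')
qed

lemma E_in: "EE \<theta> *v x \<in> eigenspace adj \<theta>"
  using E_props by blast

lemma E_id: assumes "y \<in> eigenspace adj \<theta>" shows "EE \<theta> *v y = y"
proof -
  obtain z where "y = EE \<theta> *v z" using assms E_props by blast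
  then show ?thesis using E_props by (simp add: matrix_vector_mul_assoc)
qed

lemma E_EE: "EE \<theta> *v (EE \<theta> *v x) = EE \<theta> *v x"
  using E_id[OF E_in] .

lemma E_sym: "(EE \<theta> *v x) \<bullet> y = x \<bullet> (EE \<theta> *v y)"
  using sym_matrix_inner E_props by blast

lemma E_A: "AA *v (EE \<theta> *v x) = \<theta> *\<^sub>R (EE \<theta> *v x)"
  using E_in unfolding eigenspace_def by blast

lemma E_comm: "EE \<theta> *v (AA *v x) = \<theta> *\<^sub>R (EE \<theta> *v x)"
proof (rule inner_ext)
  fix y
  have "(EE \<theta> *v (AA *v x)) \<bullet> y = (AA *v x) \<bullet> (EE \<theta> *v y)" by (rule E_sym)
  also have "\<dots> = x \<bullet> (AA *v (EE \<theta> *v y))" by (rule A_inner)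
  also have "\<dots> = \<theta> * (x \<bullet> (EE \<theta> *v y))" by (simp add: E_A)
  also have "\<dots> = (\<theta> *\<^sub>R (EE \<theta> *v x)) \<bullet> y" by (simp add: E_sym)
  finally show "(EE \<theta> *v (AA *v x)) \<bullet> y = (\<theta> *\<^sub>R (EE \<theta> *v x)) \<bullet> y" .
qed

lemma eig_orth:
  assumes "x \<in> eigenspace adj \<theta>" "y \<in> eigenspace adj \<mu>" "\<theta> \<noteq> \<mu>"
  shows "x \<bullet> y = 0"
proof -
  have "\<theta> * (x \<bullet> y) = (AA *v x) \<bullet> y" using assms(1) by (simp add: eigenspace_def)
  also have "\<dots> = x \<bullet> (AA *v y)" by (rule A_inner)
  also have "\<dots> = \<mu> * (x \<bullet> y)" using assms(2) by (simp add: eigenspace_def)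
  finally show ?thesis using assms(3) by simp
qed

lemma E_orth:
  assumes "\<theta> \<noteq> \<mu>" "y \<in> eigenspace adj \<mu>"
  shows "EE \<theta> *v y = 0"
proof -
  have "(EE \<theta> *v y) \<bullet> (EE \<theta> *v y) = y \<bullet> (EE \<theta> *v (EE \<theta> *v y))" by (rule E_sym)
  also have "\<dots> = y \<bullet> (EE \<theta> *v y)" by (simp add: E_EE)
  also have "\<dots> = 0" using eig_orth[OF E_in assms(2)] assms(1) by (simp add: inner_commute)
  finally show ?thesis by simp
qed

lemma E_E_orth: "\<theta> \<noteq> \<mu> \<Longrightarrow> EE \<theta> *v (EE \<mu> *v x) = 0"
  using E_orth E_in by blast

lemma eigenvalue_iff: "eigenvalue adj \<theta> \<longleftrightarrow> eigenspace adj \<theta> \<noteq> {0}"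
  unfolding eigenvalue_def eigenspace_def by auto

lemma E_nonev: "\<not> eigenvalue adj \<theta> \<Longrightarrow> EE \<theta> *v x = 0"
  using E_in[of \<theta> x] unfolding eigenvalue_def eigenspace_def by auto

lemma EV_finite: "finite EV"
proof -
  have "\<forall>\<theta>\<in>EV. \<exists>x. x \<noteq> 0 \<and> x \<in> eigenspace adj \<theta>"
    unfolding eigenvalue_def eigenspace_def by auto
  then obtain g where g: "\<And>\<theta>. \<theta> \<in> EV \<Longrightarrow> g \<theta> \<noteq> 0 \<and> g \<theta> \<in> eigenspace adj \<theta>"
    by metis
  have inj: "inj_on g EV"
  proof (rule inj_onI)
    fix a b assume ab: "a \<in> EV" "b \<in> EV" "g a = g b"
    show "a = b"
    proof (rule ccontr)
      assume "a \<noteq> b"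
      then have "g a \<bullet> g b = 0" using g ab eig_orth by blast
      then show False using ab g by simp
    qed
  qed
  have "pairwise orthogonal (g ` EV)"
    unfolding pairwise_def orthogonal_def using g eig_orth by (metis imageE)
  moreover have "0 \<notin> g ` EV" using g by auto
  ultimately have "independent (g ` EV)" by (rule pairwise_orthogonal_independent)
  then have "finite (g ` EV)" by (rule independent_imp_finite)
  then show ?thesis using inj finite_imageD by blast
qed

lemma maxeig:
  assumes W: "subspace W" and inv: "\<And>w. w \<in> W \<Longrightarrow> AA *v w \<in> W"
    and x0: "x0 \<in> W" "x0 \<bullet> x0 = 1"
    and mx: "\<And>y. y \<in> W \<Longrightarrow> y \<bullet> (AA *v y) \<le> (x0 \<bullet> (AA *v x0)) * (y \<bullet> y)"
  shows "AA *v x0 = (x0 \<bullet> (AA *v x0)) *\<^sub>R x0"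
proof -
  define l where "l = x0 \<bullet> (AA *v x0)"
  define w where "w = AA *v x0 - l *\<^sub>R x0"
  have wW: "w \<in> W" using W inv x0 by (simp add: w_def subspace_diff subspace_scale)
  have Ax0: "AA *v x0 = w + l *\<^sub>R x0" by (simp add: w_def)
  have wx: "w \<bullet> x0 = 0" by (simp add: w_def inner_diff_left inner_diff_right x0 l_def inner_commute)
  define b where "b = w \<bullet> w"
  define c where "c = l * b - w \<bullet> (AA *v w)"
  have wA: "w \<bullet> (AA *v x0) = b" by (simp add: Ax0 inner_add_right wx b_def)
  have xAw: "x0 \<bullet> (AA *v w) = b" using wA A_inner[of x0 w] by (simp add: inner_commute)
  have key: "2 * t * b \<le> t^2 * c" for t
  proof -
    let ?y = "x0 + t *\<^sub>R w"
    have "?y \<in> W" using W x0 wW by (simp add: subspace_add subspace_scale)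
    then have le: "?y \<bullet> (AA *v ?y) \<le> l * (?y \<bullet> ?y)" using mx l_def by simp
    have e1: "?y \<bullet> (AA *v ?y) = l + 2*t*b + t^2 * (w \<bullet> (AA *v w))"
      by (simp add: matrix_vector_right_distrib matrix_vector_mult_scaleR inner_add_left
          inner_add_right wA xAw l_def power2_eq_square algebra_simps)
    have e2: "?y \<bullet> ?y = 1 + t^2 * b"
      by (simp add: inner_add_left inner_add_right x0 wx inner_commute b_def power2_eq_square)
    have "l + 2*t*b + t^2 * (w \<bullet> (AA *v w)) \<le> l * (1 + t^2 * b)" using le unfolding e1 e2 .
    then show ?thesis unfolding c_def by (simp add: algebra_simps)
  qed
  have b0: "b \<ge> 0" by (simp add: b_def)
  have "b = 0"
  proof (rule ccontr)
    assume "b \<noteq> 0"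
    then have bp: "b > 0" using b0 by simp
    define t where "t = b / (\<bar>c\<bar> + 1)"
    have tp: "t > 0" using bp by (simp add: t_def add_pos_nonneg)
    have "2 * t * b \<le> t^2 * c" by (rule key)
    then have "t * (2 * b) \<le> t * (t * c)" by (simp add: power2_eq_square algebra_simps)
    then have 1: "2 * b \<le> t * c" using tp by (simp add: mult_le_cancel_left)
    have "t * c \<le> t * \<bar>c\<bar>" using tp by (simp add: mult_left_mono)
    also have "t * \<bar>c\<bar> = b * \<bar>c\<bar> / (\<bar>c\<bar> + 1)" by (simp add: t_def)
    also have "\<dots> < b"
    proof -
      have "b * \<bar>c\<bar> < b * (\<bar>c\<bar> + 1)" using bp by simp
      moreover have "\<bar>c\<bar> + 1 > 0" by (simp add: add_nonneg_pos)
      ultimately show ?thesis by (simp add: pos_divide_less_eq)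
    qed
    finally show False using 1 bp by simp
  qed
  then have "w = 0" by (simp add: b_def)
  then show ?thesis by (simp add: w_def l_def)
qed

lemma maxex:
  assumes W: "subspace W" and nz: "W \<noteq> {0}"
  shows "\<exists>x0\<in>W. x0 \<bullet> x0 = 1 \<and> (\<forall>y\<in>W. y \<bullet> (AA *v y) \<le> (x0 \<bullet> (AA *v x0)) * (y \<bullet> y))"
proof -
  let ?S = "sphere 0 1 \<inter> W"
  have cpt: "compact ?S" using closed_subspace[OF W] compact_sphere by (rule compact_Int_closed[rotated])
  obtain w where w: "w \<in> W" "w \<noteq> 0" using nz W subspace_0 by blast
  then have "w /\<^sub>R norm w \<in> ?S" by (simp add: subspace_scale W)
  then have ne: "?S \<noteq> {}" by blast
  have "continuous_on ?S (\<lambda>y. y \<bullet> (AA *v y))" by (intro continuous_intros)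
  then obtain x0 where x0: "x0 \<in> ?S" "\<forall>y\<in>?S. y \<bullet> (AA *v y) \<le> x0 \<bullet> (AA *v x0)"
    using continuous_attains_sup[OF cpt ne] by blast
  have n1: "x0 \<bullet> x0 = 1" using x0(1) by (simp add: power2_norm_eq_inner[symmetric])
  have "y \<bullet> (AA *v y) \<le> (x0 \<bullet> (AA *v x0)) * (y \<bullet> y)" if y: "y \<in> W" for y
  proof (cases "y = 0")
    case True then show ?thesis by simp
  next
    case False
    let ?y = "y /\<^sub>R norm y"
    have "?y \<in> ?S" using y False by (simp add: subspace_scale W)
    then have "?y \<bullet> (AA *v ?y) \<le> x0 \<bullet> (AA *v x0)" using x0 by blast
    moreover have "?y \<bullet> (AA *v ?y) = (y \<bullet> (AA *v y)) / (norm y)^2"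
      using False by (simp add: matrix_vector_mult_scaleR power2_eq_square field_simps)
    ultimately have "y \<bullet> (AA *v y) \<le> (x0 \<bullet> (AA *v x0)) * (norm y)^2"
      using False by (simp add: divide_le_eq)
    then show ?thesis by (simp add: power2_norm_eq_inner)
  qed
  then show ?thesis using x0 n1 by auto
qed

lemma eigvec_exists:
  assumes W: "subspace W" and inv: "\<And>w. w \<in> W \<Longrightarrow> AA *v w \<in> W" and nz: "W \<noteq> {0}"
  shows "\<exists>x\<in>W. x \<noteq> 0 \<and> (\<exists>l. AA *v x = l *\<^sub>R x)"
proof -
  obtain x0 where x0: "x0 \<in> W" "x0 \<bullet> x0 = 1"
     "\<forall>y\<in>W. y \<bullet> (AA *v y) \<le> (x0 \<bullet> (AA *v x0)) * (y \<bullet> y)"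
    using maxex[OF W nz] by blast
  have "AA *v x0 = (x0 \<bullet> (AA *v x0)) *\<^sub>R x0" using maxeig[OF W inv x0(1,2)] x0(3) by blast
  moreover have "x0 \<noteq> 0" using x0 by auto
  ultimately show ?thesis using x0 by blast
qed

lemma spectral: "x = (\<Sum>\<theta>\<in>EV. EE \<theta> *v x)"
proof -
  define z where "z = x - (\<Sum>\<theta>\<in>EV. EE \<theta> *v x)"
  have orth: "z \<bullet> y = 0" if y: "y \<in> eigenspace adj \<mu>" for y \<mu>
  proof (cases "eigenvalue adj \<mu>")
    case True
    have "(\<Sum>\<theta>\<in>EV. EE \<theta> *v x) \<bullet> y = (\<Sum>\<theta>\<in>EV. x \<bullet> (EE \<theta> *v y))"
      by (simp add: inner_sum_left E_sym)
    also have "\<dots> = (\<Sum>\<theta>\<in>EV. if \<theta> = \<mu> then x \<bullet> y else 0)"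
      by (rule sum.cong) (auto simp: E_id[OF y] E_orth[OF _ y])
    also have "\<dots> = x \<bullet> y" using True EV_finite by simp
    finally show ?thesis by (simp add: z_def inner_diff_left)
  next
    case False
    then have "y = 0" using y unfolding eigenvalue_def eigenspace_def by auto
    then show ?thesis by simp
  qed
  define W where "W = {w. \<forall>\<mu> y. y \<in> eigenspace adj \<mu> \<longrightarrow> w \<bullet> y = 0}"
  have sW: "subspace W" unfolding subspace_def W_def by (auto simp: inner_add_left)
  have inv: "AA *v w \<in> W" if "w \<in> W" for w
  proof -
    have "(AA *v w) \<bullet> y = 0" if "y \<in> eigenspace adj \<mu>" for y \<mu>
    proof -
      have "(AA *v w) \<bullet> y = w \<bullet> (AA *v y)" by (rule A_inner)
      also have "\<dots> = \<mu> * (w \<bullet> y)" using that by (simp add: eigenspace_def)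
      also have "\<dots> = 0" using \<open>w \<in> W\<close> that W_def by simp
      finally show ?thesis .
    qed
    then show ?thesis by (simp add: W_def)
  qed
  have "W = {0}"
  proof (rule ccontr)
    assume "W \<noteq> {0}"
    then obtain e l where e: "e \<in> W" "e \<noteq> 0" "AA *v e = l *\<^sub>R e"
      using eigvec_exists[OF sW inv] by blast
    then have "e \<in> eigenspace adj l" by (simp add: eigenspace_def)
    then have "e \<bullet> e = 0" using e(1) W_def by blast
    then show False using e(2) by simp
  qed
  moreover have "z \<in> W" using orth W_def by blast
  ultimately show ?thesis by (simp add: z_def)
qed

end

context sg begin

lemma conn: "\<exists>n. (adj ^^ n) u w" using cg unfolding connected_graph_def by blast

lemma zero_prop:
  assumes nn: "\<And>i. y $ i \<ge> 0" and ev: "AA *v y = l *\<^sub>R y" and k: "y $ k = 0"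
  shows "y = 0"
proof -
  have step: "y $ j = 0" if "y $ w = 0" "adj w j" for w j
  proof -
    have "(AA *v y) $ w = 0" using ev that(1) by simp
    then have s: "(\<Sum>j\<in>UNIV. if adj w j then y $ j else 0) = 0" unfolding Av .
    have "(if adj w j then y $ j else 0) \<le> (\<Sum>j\<in>UNIV. if adj w j then y $ j else 0)"
      by (rule member_le_sum) (auto simp: nn)
    then have "y $ j \<le> 0" using s that(2) by simp
    then show ?thesis using nn[of j] by simp
  qed
  have "(adj ^^ n) k w \<Longrightarrow> y $ w = 0" for n w
  proof (induction n arbitrary: w)
    case 0 then show ?case using k by simp
  next
    case (Suc n)
    from Suc.prems obtain m where "(adj ^^ n) k m" "adj m w" by (rule relpowp_Suc_E)
    then show ?case using Suc.IH step by blast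
  qed
  then show ?thesis using conn by (metis vec_eq_iff zero_index)
qed

lemma xAx: "x \<bullet> (AA *v x) = (\<Sum>i\<in>UNIV. \<Sum>j\<in>UNIV. if adj i j then x$i * x$j else 0)"
  unfolding inner_vec_def Av by (simp add: sum_distrib_left if_distrib cong: if_cong)

lemma perron_exists: "\<exists>\<phi>. (\<forall>i. \<phi> $ i > 0) \<and> AA *v \<phi> = Max EV *\<^sub>R \<phi>"
proof -
  have "(UNIV :: (real^'n) set) \<noteq> {0}"
    by (metis axis_nth singletonD UNIV_I zero_index zero_neq_one)
  then obtain x0 where x0: "x0 \<bullet> x0 = 1" "\<forall>y. y \<bullet> (AA *v y) \<le> (x0 \<bullet> (AA *v x0)) * (y \<bullet> y)"
    using maxex[of UNIV] by auto
  define y where "y = (\<chi> i. \<bar>x0 $ i\<bar>)"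
  have yy: "y \<bullet> y = x0 \<bullet> x0" by (simp add: y_def inner_vec_def)
  have ge: "x0 \<bullet> (AA *v x0) \<le> y \<bullet> (AA *v y)"
    unfolding xAx y_def by (intro sum_mono) (auto simp: abs_mult[symmetric])
  have my: "z \<bullet> (AA *v z) \<le> (y \<bullet> (AA *v y)) * (z \<bullet> z)" for z
  proof -
    have "z \<bullet> (AA *v z) \<le> (x0 \<bullet> (AA *v x0)) * (z \<bullet> z)" using x0 by blast
    also have "\<dots> \<le> (y \<bullet> (AA *v y)) * (z \<bullet> z)" using ge by (simp add: mult_right_mono)
    finally show ?thesis .
  qed
  have eig: "AA *v y = (y \<bullet> (AA *v y)) *\<^sub>R y"
    using maxeig[of UNIV y] my yy x0 by auto
  have y0: "y \<noteq> 0" using yy x0 by auto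
  have nn: "y $ i \<ge> 0" for i by (simp add: y_def)
  have pos: "y $ i > 0" for i
    using zero_prop[OF nn eig, of i] y0 nn[of i] by linarith
  have lev: "eigenvalue adj (y \<bullet> (AA *v y))" using eig y0 eigenvalue_def by blast
  have "Max EV = y \<bullet> (AA *v y)"
  proof (rule Max_eqI[OF EV_finite])
    fix \<mu> assume "\<mu> \<in> EV"
    then obtain v where v: "v \<noteq> 0" "AA *v v = \<mu> *\<^sub>R v" by (auto simp: eigenvalue_def)
    have "\<mu> * (v \<bullet> v) = v \<bullet> (AA *v v)" using v by simp
    also have "\<dots> \<le> (y \<bullet> (AA *v y)) * (v \<bullet> v)" using my by blast
    finally show "\<mu> \<le> y \<bullet> (AA *v y)" using v by (simp add: mult_le_cancel_right)
  qed (use lev in simp)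
  then show ?thesis using pos eig by auto
qed

definition phi where "phi = perron_vec adj"

lemma phi: "(\<forall>i. phi $ i > 0) \<and> AA *v phi = Max EV *\<^sub>R phi"
  unfolding phi_def perron_vec_def using perron_exists by (rule someI_ex)

lemma phi_pos: "phi $ i > 0" using phi by blast
lemma phi_eig: "AA *v phi = Max EV *\<^sub>R phi" using phi by blast

lemma eig_mult_phi:
  assumes "AA *v x = Max EV *\<^sub>R x"
  shows "\<exists>c. x = c *\<^sub>R phi"
proof -
  define r where "r i = x $ i / phi $ i" for i
  define c where "c = Min (range r)"
  have fin: "finite (range r)" by simp
  have "c \<in> range r" unfolding c_def by (rule Min_in[OF fin]) simp
  then obtain k where k: "c = r k" by blast
  have cle: "c \<le> r i" for i unfolding c_def using fin by simp
  define y where "y = x - c *\<^sub>R phi"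
  have nn: "y $ i \<ge> 0" for i
    using cle[of i] phi_pos[of i] by (simp add: y_def r_def pos_le_divide_eq)
  have yk: "y $ k = 0" using phi_pos[of k] by (simp add: y_def k r_def)
  have ev: "AA *v y = Max EV *\<^sub>R y"
    using assms phi_eig by (simp add: y_def matrix_vector_mult_diff_distrib matrix_vector_mult_scaleR algebra_simps)
  have "y = 0" by (rule zero_prop[OF nn ev yk])
  then show ?thesis unfolding y_def by auto
qed

lemma gdist_walk: "(adj ^^ gdist adj u w) u w"
  unfolding gdist_def using conn by (rule LeastI_ex)

lemma gdist_le: "(adj ^^ n) u w \<Longrightarrow> gdist adj u w \<le> n"
  unfolding gdist_def by (rule Least_le)

lemma walk_rev: "(adj ^^ n) u w \<Longrightarrow> (adj ^^ n) w u"
proof (induction n arbitrary: w)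
  case 0 then show ?case by simp
next
  case (Suc n)
  from Suc.prems obtain m where "(adj ^^ n) u m" "adj m w" by (rule relpowp_Suc_E)
  then show ?case using Suc.IH adj_sym relpowp_Suc_I2 by metis
qed

lemma gdist_sym: "gdist adj u w = gdist adj w u"
proof (rule antisym)
  show "gdist adj u w \<le> gdist adj w u" by (rule gdist_le) (rule walk_rev[OF gdist_walk])
  show "gdist adj w u \<le> gdist adj u w" by (rule gdist_le) (rule walk_rev[OF gdist_walk])
qed

lemma walk_trans: "(adj ^^ m) u x \<Longrightarrow> (adj ^^ n) x w \<Longrightarrow> (adj ^^ (m+n)) u w"
  by (auto simp: relpowp_add)

lemma gdist_tri: "gdist adj u w \<le> gdist adj u x + gdist adj x w"
  using gdist_le walk_trans gdist_walk by blast

lemma gdist_0: "gdist adj u w = 0 \<longleftrightarrow> w = u"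
proof
  assume "gdist adj u w = 0"
  then show "w = u" using gdist_walk[of u w] by simp
next
  assume "w = u"
  then show "gdist adj u w = 0" using gdist_le[of 0 u u] by simp
qed

lemma walk_split:
  assumes "(adj ^^ n) u w" "k \<le> n"
  shows "\<exists>x. (adj ^^ k) u x \<and> (adj ^^ (n-k)) x w"
proof -
  have "(adj ^^ (k + (n-k))) u w" using assms by simp
  then show ?thesis unfolding relpowp_add by blast
qed

lemma gdist_mid:
  assumes "k \<le> gdist adj u w"
  shows "\<exists>x. gdist adj u x = k \<and> gdist adj x w = gdist adj u w - k"
proof -
  obtain x where x: "(adj ^^ k) u x" "(adj ^^ (gdist adj u w - k)) x w"
    using walk_split[OF gdist_walk assms] by blast
  have a: "gdist adj u x \<le> k" using gdist_le[OF x(1)] .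
  have b: "gdist adj x w \<le> gdist adj u w - k" using gdist_le[OF x(2)] .
  have "gdist adj u w \<le> gdist adj u x + gdist adj x w" by (rule gdist_tri)
  then show ?thesis using a b assms by (intro exI[of _ x]) linarith
qed

lemma fin_range_gdist: "finite (range (gdist adj u))" by simp

lemma ecc_ge: "gdist adj u w \<le> ecc adj u"
  unfolding ecc_def by (simp add: fin_range_gdist)

lemma ecc_attained: "\<exists>w. gdist adj u w = ecc adj u"
proof -
  have "ecc adj u \<in> range (gdist adj u)" unfolding ecc_def by (rule Max_in) auto
  then show ?thesis by auto
qed

lemma dist_exists:
  assumes "k \<le> ecc adj u"
  shows "\<exists>w. gdist adj u w = k"
proof -
  obtain w0 where "gdist adj u w0 = ecc adj u" using ecc_attained by blast
  then have "k \<le> gdist adj u w0" using assms by simp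
  then show ?thesis using gdist_mid by blast
qed

definition Mp where "Mp k x = ((\<lambda>v. AA *v v) ^^ k) x"

lemma Mp_0[simp]: "Mp 0 x = x" by (simp add: Mp_def)
lemma Mp_Suc: "Mp (Suc k) x = AA *v Mp k x" by (simp add: Mp_def)

lemma evec_nth: "evec u $ w = (if w = u then 1 else 0)"
  by (simp add: evec_def axis_def)

lemma wv_nonneg: "Mp k (evec u) $ w \<ge> 0"
proof (induction k arbitrary: w)
  case 0 then show ?case by (simp add: evec_nth)
next
  case (Suc k) then show ?case by (simp add: Mp_Suc Av sum_nonneg)
qed

lemma wv_pos: "Mp k (evec u) $ w > 0 \<longleftrightarrow> (adj ^^ k) u w"
proof (induction k arbitrary: w)
  case 0 then show ?case by (auto simp: evec_nth)
next
  case (Suc k)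
  have nn: "\<forall>j\<in>UNIV. (if adj w j then Mp k (evec u) $ j else 0) \<ge> 0" using wv_nonneg by simp
  have "Mp (Suc k) (evec u) $ w > 0 \<longleftrightarrow> (\<exists>j. adj w j \<and> Mp k (evec u) $ j > 0)"
  proof
    assume "0 < Mp (Suc k) (evec u) $ w"
    then have "(\<Sum>j\<in>UNIV. if adj w j then Mp k (evec u) $ j else 0) \<noteq> 0" by (simp add: Mp_Suc Av)
    then have "\<exists>j\<in>UNIV. (if adj w j then Mp k (evec u) $ j else 0) \<noteq> 0"
    proof (rule contrapos_np)
      assume "\<not> (\<exists>j\<in>UNIV. (if adj w j then Mp k (evec u) $ j else 0) \<noteq> 0)"
      then have "\<forall>j\<in>UNIV. (if adj w j then Mp k (evec u) $ j else 0) = 0" by blast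
      then show "(\<Sum>j\<in>UNIV. if adj w j then Mp k (evec u) $ j else 0) = 0" by (rule sum.neutral)
    qed
    then obtain j where "(if adj w j then Mp k (evec u) $ j else 0) \<noteq> 0" by blast
    then show "\<exists>j. adj w j \<and> Mp k (evec u) $ j > 0" using wv_nonneg[of k u j]
      by (auto split: if_splits)
  next
    assume "\<exists>j. adj w j \<and> 0 < Mp k (evec u) $ j"
    then obtain j where j: "adj w j" "0 < Mp k (evec u) $ j" by blast
    have "(if adj w j then Mp k (evec u) $ j else 0) \<le> (\<Sum>j\<in>UNIV. if adj w j then Mp k (evec u) $ j else 0)"
      by (rule member_le_sum) (use nn in auto)
    then show "0 < Mp (Suc k) (evec u) $ w" using j by (simp add: Mp_Suc Av)
  qed
  also have "\<dots> \<longleftrightarrow> (adj ^^ Suc k) u w"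
  proof
    assume "\<exists>j. adj w j \<and> Mp k (evec u) $ j > 0"
    then obtain j where "adj w j" "(adj ^^ k) u j" using Suc.IH by blast
    then show "(adj ^^ Suc k) u w" using adj_sym relpowp_Suc_I by metis
  next
    assume "(adj ^^ Suc k) u w"
    then obtain j where "(adj ^^ k) u j" "adj j w" by (rule relpowp_Suc_E)
    then show "\<exists>j. adj w j \<and> Mp k (evec u) $ j > 0" using Suc.IH adj_sym by blast
  qed
  finally show ?case .
qed

lemma wv_nz: "Mp k (evec u) $ w \<noteq> 0 \<longleftrightarrow> (adj ^^ k) u w"
proof -
  have "Mp k (evec u) $ w \<ge> 0" by (rule wv_nonneg)
  then show ?thesis using wv_pos[of k u w] by auto
qed

abbreviation Wsp where "Wsp u i \<equiv> span ((\<lambda>k. Mp k (evec u)) ` {..i})"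

lemma Wsp_supp:
  assumes "y \<in> Wsp u i" "i < gdist adj u w"
  shows "y $ w = 0"
proof -
  have "Wsp u i \<subseteq> {y. y $ w = 0}"
  proof (rule span_minimal)
    show "(\<lambda>k. Mp k (evec u)) ` {..i} \<subseteq> {y. y $ w = 0}"
      using wv_nz gdist_le assms(2) by fastforce
    show "subspace {y::real^'n. y $ w = 0}" by (auto simp: subspace_def)
  qed
  then show ?thesis using assms(1) by blast
qed

lemma dim_Wsp: "i \<le> ecc adj u \<Longrightarrow> i + 1 \<le> dim ((\<lambda>k. Mp k (evec u)) ` {..i})"
proof (induction i)
  case 0
  have "evec u \<noteq> 0" by (simp add: evec_def)
  have "evec u \<in> span {evec u}" by (rule span_base) simp
  moreover have "evec u \<notin> span {}" using \<open>evec u \<noteq> 0\<close> by simp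
  moreover have "span {} \<subseteq> span {evec u}" by (rule span_mono) simp
  ultimately have "span {} \<subset> span {evec u}" by blast
  then have "dim ({} :: (real^'n) set) < dim {evec u}" by (rule dim_psubset)
  then show ?case by simp
next
  case (Suc i)
  obtain w where w: "gdist adj u w = Suc i" using dist_exists Suc.prems by blast
  have nz: "Mp (Suc i) (evec u) $ w \<noteq> 0" using wv_nz[of "Suc i" u w] gdist_walk[of u w] w by simp
  have notin: "Mp (Suc i) (evec u) \<notin> Wsp u i"
  proof
    assume "Mp (Suc i) (evec u) \<in> Wsp u i"
    then have "Mp (Suc i) (evec u) $ w = 0" by (rule Wsp_supp) (simp add: w)
    then show False using nz by simp
  qed
  have "Wsp u i \<subseteq> Wsp u (Suc i)" by (intro span_mono image_mono) auto
  moreover have "Mp (Suc i) (evec u) \<in> Wsp u (Suc i)" by (intro span_base) auto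
  ultimately have "Wsp u i \<subset> Wsp u (Suc i)" using notin by blast
  then have "dim ((\<lambda>k. Mp k (evec u)) ` {..i}) < dim ((\<lambda>k. Mp k (evec u)) ` {..Suc i})"
    by (rule dim_psubset)
  then show ?case using Suc by simp
qed

abbreviation Cy where "Cy x \<equiv> span (range (\<lambda>k. Mp k x))"

lemma subspace_preimage_A: "subspace S \<Longrightarrow> subspace {y. AA *v y \<in> S}"
  by (auto simp: subspace_def matrix_vector_right_distrib matrix_vector_mult_scaleR)

lemma Cy_inv: "y \<in> Cy x \<Longrightarrow> AA *v y \<in> Cy x"
proof -
  assume y: "y \<in> Cy x"
  have "Cy x \<subseteq> {y. AA *v y \<in> Cy x}"
  proof (rule span_minimal)
    show "range (\<lambda>k. Mp k x) \<subseteq> {y. AA *v y \<in> Cy x}"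
      by (auto simp: Mp_Suc[symmetric] intro!: span_base)
    show "subspace {y. AA *v y \<in> Cy x}" by (rule subspace_preimage_A) (rule subspace_span)
  qed
  then show ?thesis using y by blast
qed

lemma Cy_min:
  assumes "subspace Q" "\<And>q. q \<in> Q \<Longrightarrow> AA *v q \<in> Q" "x \<in> Q"
  shows "Cy x \<subseteq> Q"
proof (rule span_minimal)
  have "Mp k x \<in> Q" for k by (induction k) (use assms in \<open>auto simp: Mp_Suc\<close>)
  then show "range (\<lambda>k. Mp k x) \<subseteq> Q" by auto
qed (rule assms(1))

lemma Wsp_Cy: "Wsp u i \<subseteq> Cy (evec u)"
  by (intro span_mono) auto

end

context sg begin

lemma E_Mp: "EE \<theta> *v Mp k x = \<theta>^k *\<^sub>R (EE \<theta> *v x)"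
  by (induction k) (simp_all add: Mp_Suc E_comm)

definition pm :: "real poly \<Rightarrow> real^'n \<Rightarrow> real^'n" where
  "pm p x = (\<Sum>i\<le>degree p. coeff p i *\<^sub>R Mp i x)"

lemma pm_Cy: "pm p x \<in> Cy x"
  unfolding pm_def by (intro span_sum span_scale span_base) auto

lemma E_pm: "EE \<theta> *v pm p x = poly p \<theta> *\<^sub>R (EE \<theta> *v x)"
proof -
  have "EE \<theta> *v pm p x = (\<Sum>i\<le>degree p. EE \<theta> *v (coeff p i *\<^sub>R Mp i x))"
    unfolding pm_def by (rule linear_sum[OF matrix_vector_mul_linear])
  also have "\<dots> = (\<Sum>i\<le>degree p. (coeff p i * \<theta>^i) *\<^sub>R (EE \<theta> *v x))"
    by (simp add: matrix_vector_mult_scaleR E_Mp)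
  also have "\<dots> = poly p \<theta> *\<^sub>R (EE \<theta> *v x)" by (simp add: poly_altdef scaleR_sum_left)
  finally show ?thesis .
qed

lemma lagrange:
  fixes S :: "real set" and \<theta> :: real
  assumes "finite S"
  shows "\<exists>p. poly p \<theta> = 1 \<and> (\<forall>\<mu>\<in>S. \<mu> \<noteq> \<theta> \<longrightarrow> poly p \<mu> = 0)"
proof -
  define q where "q = (\<Prod>\<mu>\<in>S-{\<theta>}. [:-\<mu>, 1:])"
  have q: "poly q x = (\<Prod>\<mu>\<in>S-{\<theta>}. x - \<mu>)" for x by (simp add: q_def poly_prod)
  have nz: "poly q \<theta> \<noteq> 0" using assms by (simp add: q)
  define p where "p = smult (1 / poly q \<theta>) q"
  have "poly p \<theta> = 1" using nz by (simp add: p_def)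
  moreover have "poly p \<mu> = 0" if "\<mu> \<in> S" "\<mu> \<noteq> \<theta>" for \<mu>
  proof -
    have "poly q \<mu> = 0" using that assms by (simp add: q)
    then show ?thesis by (simp add: p_def)
  qed
  ultimately show ?thesis by blast
qed

lemma E_in_Cy: "EE \<theta> *v x \<in> Cy x"
proof (cases "eigenvalue adj \<theta>")
  case False then show ?thesis by (simp add: E_nonev span_zero)
next
  case True
  obtain p where p: "poly p \<theta> = 1" "\<forall>\<mu>\<in>EV. \<mu> \<noteq> \<theta> \<longrightarrow> poly p \<mu> = 0"
    using lagrange[OF EV_finite] by blast
  have "pm p x = (\<Sum>\<mu>\<in>EV. EE \<mu> *v pm p x)" by (rule spectral)
  also have "\<dots> = (\<Sum>\<mu>\<in>EV. if \<mu> = \<theta> then EE \<theta> *v x else 0)"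
    by (rule sum.cong) (auto simp: E_pm p)
  also have "\<dots> = EE \<theta> *v x" using True EV_finite by simp
  finally show ?thesis using pm_Cy by metis
qed

abbreviation Phi where "Phi u \<equiv> eig_support adj u"

lemma supp_sub: "Phi u \<subseteq> EV" unfolding eig_support_def by auto
lemma supp_fin: "finite (Phi u)" using supp_sub EV_finite finite_subset by blast

lemma Cy_eq: "Cy (evec u) = span ((\<lambda>\<theta>. EE \<theta> *v evec u) ` Phi u)"
proof
  show "Cy (evec u) \<subseteq> span ((\<lambda>\<theta>. EE \<theta> *v evec u) ` Phi u)"
  proof (rule span_minimal)
    show "range (\<lambda>k. Mp k (evec u)) \<subseteq> span ((\<lambda>\<theta>. EE \<theta> *v evec u) ` Phi u)"
    proof clarify
      fix k
      have "Mp k (evec u) = (\<Sum>\<mu>\<in>EV. EE \<mu> *v Mp k (evec u))" by (rule spectral)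
      also have "\<dots> = (\<Sum>\<mu>\<in>EV. \<mu>^k *\<^sub>R (EE \<mu> *v evec u))" by (simp add: E_Mp)
      also have "\<dots> \<in> span ((\<lambda>\<theta>. EE \<theta> *v evec u) ` Phi u)"
      proof (intro span_sum)
        fix \<mu> assume "\<mu> \<in> EV"
        show "\<mu>^k *\<^sub>R (EE \<mu> *v evec u) \<in> span ((\<lambda>\<theta>. EE \<theta> *v evec u) ` Phi u)"
        proof (cases "EE \<mu> *v evec u = 0")
          case True then show ?thesis by (simp add: span_zero)
        next
          case False
          then have "EE \<mu> *v evec u \<in> (\<lambda>\<theta>. EE \<theta> *v evec u) ` Phi u"
            using \<open>\<mu> \<in> EV\<close> by (auto simp: eig_support_def)
          then show ?thesis by (rule span_scale[OF span_base])
        qed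
      qed
      finally show "Mp k (evec u) \<in> span ((\<lambda>\<theta>. EE \<theta> *v evec u) ` Phi u)" .
    qed
  qed (rule subspace_span)
next
  show "span ((\<lambda>\<theta>. EE \<theta> *v evec u) ` Phi u) \<subseteq> Cy (evec u)"
    by (rule span_minimal) (auto simp: E_in_Cy)
qed

lemma EuEu_orth: "\<theta> \<noteq> \<mu> \<Longrightarrow> (EE \<theta> *v x) \<bullet> (EE \<mu> *v x) = 0"
  by (simp add: E_sym E_E_orth)

lemma supp_inj: "inj_on (\<lambda>\<theta>. EE \<theta> *v evec u) (Phi u)"
proof (rule inj_onI)
  fix a b assume ab: "a \<in> Phi u" "b \<in> Phi u" "EE a *v evec u = EE b *v evec u"
  show "a = b"
  proof (rule ccontr)
    assume "a \<noteq> b"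
    have "(EE b *v evec u) \<bullet> (EE b *v evec u) = 0"
      using EuEu_orth[OF \<open>a \<noteq> b\<close>, of "evec u"] unfolding ab(3) .
    then show False using ab(2) by (simp add: eig_support_def)
  qed
qed

lemma supp_indep: "independent ((\<lambda>\<theta>. EE \<theta> *v evec u) ` Phi u)"
proof (rule pairwise_orthogonal_independent)
  show "pairwise orthogonal ((\<lambda>\<theta>. EE \<theta> *v evec u) ` Phi u)"
  proof (rule pairwiseI)
    fix x y assume xy: "x \<in> (\<lambda>\<theta>. EE \<theta> *v evec u) ` Phi u" "y \<in> (\<lambda>\<theta>. EE \<theta> *v evec u) ` Phi u" "x \<noteq> y"
    then obtain a b where ab: "x = EE a *v evec u" "y = EE b *v evec u" by blast
    then have "a \<noteq> b" using xy(3) by blast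
    then show "orthogonal x y" unfolding orthogonal_def ab by (rule EuEu_orth)
  qed
  show "0 \<notin> (\<lambda>\<theta>. EE \<theta> *v evec u) ` Phi u" by (auto simp: eig_support_def)
qed

lemma dim_Cy: "dim (Cy (evec u)) = card (Phi u)"
proof -
  have "dim (Cy (evec u)) = dim (span ((\<lambda>\<theta>. EE \<theta> *v evec u) ` Phi u))" by (simp only: Cy_eq)
  also have "\<dots> = card ((\<lambda>\<theta>. EE \<theta> *v evec u) ` Phi u)"
    by (rule dim_span_eq_card_independent[OF supp_indep])
  also have "\<dots> = card (Phi u)" by (rule card_image[OF supp_inj])
  finally show ?thesis .
qed

lemma supp_ne: "Phi u \<noteq> {}"
proof
  assume e: "Phi u = {}"
  have "evec u = (\<Sum>\<theta>\<in>EV. EE \<theta> *v evec u)" by (rule spectral)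
  also have "\<dots> = 0" using e by (intro sum.neutral) (auto simp: eig_support_def)
  finally show False by (simp add: evec_def)
qed

lemma dim_Cy_dd: "dim (Cy (evec u)) = dual_degree adj u + 1"
proof -
  have "card (Phi u) > 0" using supp_ne[of u] supp_fin[of u] by (simp add: card_gt_0_iff)
  then show ?thesis using dim_Cy[of u] by (simp add: dual_degree_def)
qed

lemma ecc_dim: "ecc adj u + 1 \<le> dim (Cy (evec u))"
proof -
  have "ecc adj u + 1 \<le> dim ((\<lambda>k. Mp k (evec u)) ` {..ecc adj u})" by (rule dim_Wsp) simp
  also have "\<dots> = dim (Wsp u (ecc adj u))" by simp
  also have "\<dots> \<le> dim (Cy (evec u))" by (rule dim_subset[OF Wsp_Cy])
  finally show ?thesis .
qed

lemma phi_eigsp: "phi \<in> eigenspace adj (Max EV)"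
  using phi_eig by (simp add: eigenspace_def)

lemma phi_Cy: "phi \<in> Cy (evec u)"
proof -
  define x where "x = EE (Max EV) *v evec u"
  have xC: "x \<in> Cy (evec u)" unfolding x_def by (rule E_in_Cy)
  have "AA *v x = Max EV *\<^sub>R x" unfolding x_def by (rule E_A)
  then obtain c where c: "x = c *\<^sub>R phi" using eig_mult_phi by blast
  have "x \<bullet> phi = evec u \<bullet> phi" unfolding x_def by (simp add: E_sym E_id[OF phi_eigsp])
  also have "\<dots> = phi $ u" by (simp add: evec_def inner_axis')
  finally have "x \<bullet> phi > 0" using phi_pos by simp
  then have "c \<noteq> 0" using c by auto
  then have "phi = (1/c) *\<^sub>R x" using c by simp
  then show ?thesis using span_scale[OF xC, of "1/c"] by simp
qed

lemma Cy_coef: "y \<in> Cy (evec u) \<Longrightarrow> \<exists>c. EE \<theta> *v y = c *\<^sub>R (EE \<theta> *v evec u)"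
proof -
  assume y: "y \<in> Cy (evec u)"
  let ?T = "{y. EE \<theta> *v y \<in> span {EE \<theta> *v evec u}}"
  have "Cy (evec u) \<subseteq> ?T"
  proof (rule span_minimal)
    have "EE \<theta> *v Mp k (evec u) \<in> span {EE \<theta> *v evec u}" for k
      unfolding E_Mp by (rule span_scale[OF span_base]) simp
    then show "range (\<lambda>k. Mp k (evec u)) \<subseteq> ?T" by auto
    show "subspace ?T"
      unfolding subspace_def
      by (simp add: matrix_vector_right_distrib matrix_vector_mult_scaleR span_add span_scale span_zero)
  qed
  then have "EE \<theta> *v y \<in> span {EE \<theta> *v evec u}" using y by blast
  then show ?thesis by (auto simp: span_singleton)
qed

lemma E_diag: "EE \<theta> $ v $ v = (EE \<theta> *v evec v) \<bullet> (EE \<theta> *v evec v)"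
proof -
  have "(EE \<theta> *v evec v) \<bullet> (EE \<theta> *v evec v) = evec v \<bullet> (EE \<theta> *v evec v)"
    by (simp add: E_sym E_EE)
  also have "\<dots> = (EE \<theta> *v evec v) $ v" by (simp add: evec_def inner_axis')
  also have "\<dots> = EE \<theta> $ v $ v"
    by (simp add: matrix_vector_mul_component evec_def inner_axis)
  finally show ?thesis by simp
qed

lemma sc_from:
  assumes ev: "evec v \<in> Cy (evec u)" and co: "cospectral adj u v"
  shows "strongly_cospectral adj u v"
  unfolding strongly_cospectral_def
proof (intro allI impI)
  fix \<theta> assume th: "eigenvalue adj \<theta>"
  obtain c where c: "EE \<theta> *v evec v = c *\<^sub>R (EE \<theta> *v evec u)" using Cy_coef[OF ev] by blast
  let ?a = "EE \<theta> *v evec u"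
  have "EE \<theta> $ u $ u = EE \<theta> $ v $ v" using co th unfolding cospectral_def by blast
  then have "?a \<bullet> ?a = (EE \<theta> *v evec v) \<bullet> (EE \<theta> *v evec v)" by (simp only: E_diag)
  then have "?a \<bullet> ?a = (c *\<^sub>R ?a) \<bullet> (c *\<^sub>R ?a)" using c by simp
  then have eq: "?a \<bullet> ?a = c^2 * (?a \<bullet> ?a)" by (simp add: power2_eq_square)
  show "?a = EE \<theta> *v evec v \<or> ?a = - (EE \<theta> *v evec v)"
  proof (cases "?a = 0")
    case True then show ?thesis using c by simp
  next
    case False
    then have "?a \<bullet> ?a \<noteq> 0" by simp
    then have "c^2 = 1" using eq by simp
    then have "c = 1 \<or> c = -1" by (simp add: power2_eq_1_iff)
    then show ?thesis using c by auto
  qed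
qed

lemma sc_ev_Cy:
  assumes "strongly_cospectral adj u v"
  shows "evec v \<in> Cy (evec u)"
proof -
  have "evec v = (\<Sum>\<theta>\<in>EV. EE \<theta> *v evec v)" by (rule spectral)
  also have "\<dots> \<in> Cy (evec u)"
  proof (rule span_sum)
    fix \<theta> assume "\<theta> \<in> EV"
    then have "EE \<theta> *v evec u = EE \<theta> *v evec v \<or> EE \<theta> *v evec u = - (EE \<theta> *v evec v)"
      using assms unfolding strongly_cospectral_def by simp
    then show "EE \<theta> *v evec v \<in> Cy (evec u)"
    proof (elim disjE)
      assume "EE \<theta> *v evec u = EE \<theta> *v evec v"
      then show ?thesis using E_in_Cy[of \<theta> "evec u"] by simp
    next
      assume "EE \<theta> *v evec u = - (EE \<theta> *v evec v)"
      then have "EE \<theta> *v evec v = - (EE \<theta> *v evec u)" by simp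
      then show ?thesis using span_neg[OF E_in_Cy[of \<theta> "evec u"]] by simp
    qed
  qed
  finally show ?thesis .
qed

lemma sc_cospec:
  assumes "strongly_cospectral adj u v"
  shows "cospectral adj u v"
  unfolding cospectral_def
proof (intro allI impI)
  fix \<theta> assume "eigenvalue adj \<theta>"
  then have "EE \<theta> *v evec u = EE \<theta> *v evec v \<or> EE \<theta> *v evec u = - (EE \<theta> *v evec v)"
    using assms unfolding strongly_cospectral_def by simp
  then show "EE \<theta> $ u $ u = EE \<theta> $ v $ v" by (elim disjE) (simp_all only: E_diag inner_minus_left inner_minus_right minus_minus)
qed

end

context sg begin

definition fcl :: "'n \<Rightarrow> nat \<Rightarrow> real^'n" where
  "fcl u i = (\<chi> w. if gdist adj u w = i then phi $ w else 0)"

abbreviation Gam where "Gam u i \<equiv> {w. gdist adj u w = i}"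

lemma range_gdist: "range (gdist adj u) = {..ecc adj u}"
proof
  show "range (gdist adj u) \<subseteq> {..ecc adj u}" using ecc_ge by auto
  show "{..ecc adj u} \<subseteq> range (gdist adj u)"
  proof
    fix i assume "i \<in> {..ecc adj u}"
    then obtain w where "gdist adj u w = i" using dist_exists by auto
    then show "i \<in> range (gdist adj u)" by (metis rangeI)
  qed
qed

lemma dp_eq: "distance_partition adj u = (\<lambda>i. Gam u i) ` {..ecc adj u}"
  unfolding distance_partition_def range_gdist ..

lemma Gam_ne: "i \<le> ecc adj u \<Longrightarrow> Gam u i \<noteq> {}"
  using dist_exists by auto

lemma dp_partition: "is_partition (distance_partition adj u)"
  unfolding is_partition_def dp_eq
proof (intro conjI ballI impI)
  show "\<Union> ((\<lambda>i. Gam u i) ` {..ecc adj u}) = UNIV"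
  proof
    show "UNIV \<subseteq> \<Union> ((\<lambda>i. Gam u i) ` {..ecc adj u})"
    proof
      fix w
      have "w \<in> Gam u (gdist adj u w)" by simp
      then show "w \<in> \<Union> ((\<lambda>i. Gam u i) ` {..ecc adj u})" using ecc_ge[of u w] by blast
    qed
  qed simp
  show "{} \<notin> (\<lambda>i. Gam u i) ` {..ecc adj u}" using Gam_ne by force
  fix C C' assume "C \<in> (\<lambda>i. Gam u i) ` {..ecc adj u}" "C' \<in> (\<lambda>i. Gam u i) ` {..ecc adj u}" "C \<noteq> C'"
  then show "C \<inter> C' = {}" by auto
qed

lemma phi_perron: "perron_vec adj = phi" by (simp add: phi_def)

lemma Afcl: "(AA *v fcl u j) $ x = phi $ x * (\<Sum>y\<in>Gam u j. scaled_adj adj x y)"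
proof -
  have "(AA *v fcl u j) $ x = (\<Sum>y\<in>UNIV. if gdist adj u y = j then AA$x$y * phi $ y else 0)"
    by (simp add: matrix_vector_mult_def fcl_def if_distrib cong: if_cong)
  also have "\<dots> = (\<Sum>y\<in>Gam u j. AA$x$y * phi $ y)"
    by (simp add: sum.inter_filter[symmetric])
  also have "\<dots> = (\<Sum>y\<in>Gam u j. phi $ x * scaled_adj adj x y)"
    using phi_pos[of x] by (intro sum.cong) (auto simp: scaled_adj_def phi_perron)
  also have "\<dots> = phi $ x * (\<Sum>y\<in>Gam u j. scaled_adj adj x y)" by (simp add: sum_distrib_left)
  finally show ?thesis .
qed

lemma fcl_0: "fcl u 0 = phi $ u *\<^sub>R evec u"
  by (auto simp: vec_eq_iff fcl_def evec_nth gdist_0)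

lemma pe_extremal:
  assumes pe: "pseudo_equitable adj (distance_partition adj u)"
  shows "spectrally_extremal adj u \<and> Cy (evec u) = span (fcl u ` {..ecc adj u})"
proof -
  let ?e = "ecc adj u"
  let ?Q = "span (fcl u ` {..?e})"
  define wk where "wk k = (SOME w. gdist adj u w = k)" for k
  have wk: "gdist adj u (wk k) = k" if "k \<le> ?e" for k
    unfolding wk_def using dist_exists[OF that] by (rule someI_ex)
  have pe2: "(\<Sum>y\<in>C. scaled_adj adj x y) = (\<Sum>y\<in>C. scaled_adj adj x' y)"
    if "C \<in> distance_partition adj u" "C' \<in> distance_partition adj u" "x \<in> C'" "x' \<in> C'"
    for C C' x x'
    using pe that unfolding pseudo_equitable_def by blast
  have Af: "AA *v fcl u j \<in> ?Q" for j
  proof (cases "j \<le> ?e")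
    case False
    then have "fcl u j = 0" using ecc_ge[of u] by (auto simp: vec_eq_iff fcl_def)
    then show ?thesis by (simp add: span_zero)
  next
    case True
    define q where "q k = (\<Sum>y\<in>Gam u j. scaled_adj adj (wk k) y)" for k
    have "AA *v fcl u j = (\<Sum>k\<le>?e. q k *\<^sub>R fcl u k)"
    proof (subst vec_eq_iff, intro allI)
      fix x
      let ?k = "gdist adj u x"
      have k: "?k \<le> ?e" by (rule ecc_ge)
      have fx: "fcl u k $ x = (if ?k = k then phi $ x else 0)" for k by (simp add: fcl_def)
      have "(\<Sum>k\<le>?e. q k *\<^sub>R fcl u k) $ x = (\<Sum>k\<le>?e. q k * fcl u k $ x)" by simp
      also have "\<dots> = (\<Sum>k\<le>?e. if ?k = k then q k * phi $ x else 0)"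
        by (rule sum.cong) (simp_all add: fx)
      also have "\<dots> = q ?k * phi $ x" using k by (simp add: sum.delta)
      finally have r: "(\<Sum>k\<le>?e. q k *\<^sub>R fcl u k) $ x = q ?k * phi $ x" .
      have C: "Gam u j \<in> distance_partition adj u" using True by (simp add: dp_eq)
      have C': "Gam u ?k \<in> distance_partition adj u" using k by (simp add: dp_eq)
      have xin: "x \<in> Gam u ?k" by simp
      have win: "wk ?k \<in> Gam u ?k" using wk[OF k] by simp
      have "(\<Sum>y\<in>Gam u j. scaled_adj adj x y) = q ?k"
        unfolding q_def by (rule pe2[OF C C' xin win])
      then show "(AA *v fcl u j) $ x = (\<Sum>k\<le>?e. q k *\<^sub>R fcl u k) $ x"
        using r Afcl[of u j x] by simp
    qed
    also have "\<dots> \<in> ?Q" by (intro span_sum span_scale span_base) auto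
    finally show ?thesis .
  qed
  have inv: "AA *v y \<in> ?Q" if "y \<in> ?Q" for y
  proof -
    have "?Q \<subseteq> {y. AA *v y \<in> ?Q}"
      by (rule span_minimal) (use Af in \<open>auto intro: subspace_preimage_A subspace_span\<close>)
    then show ?thesis using that by blast
  qed
  have eu: "evec u \<in> ?Q"
  proof -
    have "fcl u 0 \<in> ?Q" by (intro span_base) auto
    then have "(1 / phi $ u) *\<^sub>R fcl u 0 \<in> ?Q" by (rule span_scale)
    then show ?thesis using phi_pos[of u] by (simp add: fcl_0)
  qed
  have CQ: "Cy (evec u) \<subseteq> ?Q" by (rule Cy_min[OF subspace_span inv eu])
  have dQ: "dim ?Q \<le> ?e + 1"
  proof -
    have "dim ?Q \<le> card (fcl u ` {..?e})" by (rule dim_le_card) auto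
    also have "\<dots> \<le> card {..?e}" by (rule card_image_le) simp
    finally show ?thesis by simp
  qed
  have dC: "dim (Cy (evec u)) \<le> dim ?Q" by (rule dim_subset[OF CQ])
  have "dual_degree adj u = ?e" using dim_Cy_dd[of u] ecc_dim[of u] dC dQ by linarith
  moreover have "Cy (evec u) = ?Q"
  proof -
    have "dim ?Q \<le> dim (Cy (evec u))" using dim_Cy_dd[of u] ecc_dim[of u] dC dQ by linarith
    then have "span (Cy (evec u)) = span ?Q" by (rule dim_eq_span[OF CQ])
    then show ?thesis by (simp add: span_span)
  qed
  ultimately show ?thesis unfolding spectrally_extremal_def by simp
qed

lemma dir1:
  assumes "antipodal adj u v"
  shows "spectrally_extremal adj u \<and> spectrally_extremal adj v \<and> strongly_cospectral adj u v"
proof -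
  obtain P where P: "pseudo_equitable adj P" "P = distance_partition adj u"
     "P = distance_partition adj v" "{u} \<in> P" "{v} \<in> P" and co: "cospectral adj u v"
    using assms unfolding antipodal_def by blast
  have eu: "spectrally_extremal adj u" and CQ: "Cy (evec u) = span (fcl u ` {..ecc adj u})"
    using pe_extremal[of u] P by auto
  have ev: "spectrally_extremal adj v" using pe_extremal[of v] P by auto
  obtain i where i: "i \<le> ecc adj u" "{v} = Gam u i" using P(2,5) by (auto simp: dp_eq)
  have fv: "fcl u i = phi $ v *\<^sub>R evec v"
  proof -
    have "gdist adj u w = i \<longleftrightarrow> w = v" for w using i(2) by blast
    then show ?thesis by (auto simp: vec_eq_iff fcl_def evec_nth)
  qed
  have "fcl u i \<in> Cy (evec u)" unfolding CQ using i(1) by (intro span_base) auto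
  then have "(1 / phi $ v) *\<^sub>R fcl u i \<in> Cy (evec u)" by (rule span_scale)
  then have "evec v \<in> Cy (evec u)" using phi_pos[of v] by (simp add: fv)
  then have "strongly_cospectral adj u v" using sc_from co by blast
  then show ?thesis using eu ev by blast
qed

end

context sg begin

lemma dir2:
  assumes ex: "spectrally_extremal adj u" and sc: "strongly_cospectral adj u v"
    and duv: "gdist adj u v = ecc adj u"
  shows "antipodal adj u v"
proof -
  define d where "d = ecc adj u"
  have dimC: "dim (Cy (evec u)) = d + 1"
    using dim_Cy_dd[of u] ex unfolding spectrally_extremal_def d_def by simp
  have evC: "evec v \<in> Cy (evec u)" by (rule sc_ev_Cy[OF sc])
  have CvC: "Cy (evec v) \<subseteq> Cy (evec u)"
    by (rule Cy_min[OF subspace_span _ evC]) (rule Cy_inv)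
  have gvu: "gdist adj v u = d" using duv gdist_sym d_def by metis
  have eccv: "d \<le> ecc adj v" using ecc_ge[of v u] gvu by simp
  have tri: "d \<le> gdist adj u w + gdist adj v w" for w
  proof -
    have "gdist adj u v \<le> gdist adj u w + gdist adj w v" by (rule gdist_tri)
    then show ?thesis using duv gdist_sym[of w v] d_def by simp
  qed
  have ex_z: "\<exists>z. z \<in> Wsp u i \<and> z \<in> Wsp v (d - i) \<and> z \<noteq> 0" if i: "i \<le> d" for i
  proof -
    let ?S = "Wsp u i" and ?T = "Wsp v (d - i)"
    have sS: "subspace ?S" and sT: "subspace ?T" by (rule subspace_span)+
    have dS: "i + 1 \<le> dim ?S" using dim_Wsp[of i u] i d_def by (simp add: dim_span)
    have dT: "d - i + 1 \<le> dim ?T" using dim_Wsp[of "d - i" v] eccv by (simp add: dim_span)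
    have sub: "{x + y |x y. x \<in> ?S \<and> y \<in> ?T} \<subseteq> Cy (evec u)"
    proof clarify
      fix x y assume "x \<in> ?S" "y \<in> ?T"
      then have "x \<in> Cy (evec u)" "y \<in> Cy (evec u)" using Wsp_Cy[of u i] Wsp_Cy[of v "d - i"] CvC by blast+
      then show "x + y \<in> Cy (evec u)" by (rule span_add)
    qed
    have "dim {x + y |x y. x \<in> ?S \<and> y \<in> ?T} \<le> d + 1" using dim_subset[OF sub] dimC by simp
    moreover have "dim {x + y |x y. x \<in> ?S \<and> y \<in> ?T} + dim (?S \<inter> ?T) = dim ?S + dim ?T"
      by (rule dim_sums_Int[OF sS sT])
    ultimately have "dim (?S \<inter> ?T) \<noteq> 0" using dS dT i by linarith
    then have "\<not> (?S \<inter> ?T \<subseteq> {0})" by simp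
    then show ?thesis by blast
  qed
  have "\<forall>i. \<exists>z. i \<le> d \<longrightarrow> z \<in> Wsp u i \<and> z \<in> Wsp v (d - i) \<and> z \<noteq> 0" using ex_z by blast
  then obtain z where z: "\<And>i. i \<le> d \<Longrightarrow> z i \<in> Wsp u i \<and> z i \<in> Wsp v (d - i) \<and> z i \<noteq> 0"
    by (metis (no_types))
  have zsupp: "gdist adj u w = i \<and> gdist adj v w = d - i" if "i \<le> d" "z i $ w \<noteq> 0" for i w
  proof -
    have a: "\<not> i < gdist adj u w" using Wsp_supp[of "z i" u i w] z[OF that(1)] that(2) by blast
    have b: "\<not> d - i < gdist adj v w" using Wsp_supp[of "z i" v "d - i" w] z[OF that(1)] that(2) by blast
    show ?thesis using a b tri[of w] that(1) by linarith
  qed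
  have znz: "\<exists>w. z i $ w \<noteq> 0" if "i \<le> d" for i
    using z[OF that] by (metis vec_eq_iff zero_index)
  have zinj: "inj_on z {..d}"
  proof (rule inj_onI)
    fix i j assume ij: "i \<in> {..d}" "j \<in> {..d}" "z i = z j"
    obtain w where w: "z i $ w \<noteq> 0" using znz ij(1) by auto
    have "gdist adj u w = i" using zsupp w ij(1) by auto
    moreover have "gdist adj u w = j" using zsupp[of j w] w ij by auto
    ultimately show "i = j" by simp
  qed
  have orth: "z i \<bullet> z j = 0" if "i \<le> d" "j \<le> d" "i \<noteq> j" for i j
  proof -
    have t: "z i $ w * z j $ w = 0" for w
    proof (rule ccontr)
      assume "z i $ w * z j $ w \<noteq> 0"
      then have "z i $ w \<noteq> 0" "z j $ w \<noteq> 0" by auto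
      then show False using zsupp that by metis
    qed
    show ?thesis unfolding inner_vec_def by (intro sum.neutral ballI) (simp add: t)
  qed
  let ?Z = "z ` {..d}"
  have indep: "independent ?Z"
  proof (rule pairwise_orthogonal_independent)
    show "pairwise orthogonal ?Z"
    proof (rule pairwiseI)
      fix x y assume "x \<in> ?Z" "y \<in> ?Z" "x \<noteq> y"
      then obtain i j where "i \<le> d" "j \<le> d" "x = z i" "y = z j" "i \<noteq> j" by blast
      then show "orthogonal x y" unfolding orthogonal_def using orth by simp
    qed
    show "0 \<notin> ?Z" using z by force
  qed
  have cardZ: "card ?Z = dim (Cy (evec u))" using card_image[OF zinj] dimC by simp
  have ZC: "?Z \<subseteq> Cy (evec u)" using z Wsp_Cy by blast
  have spanZ: "Cy (evec u) \<subseteq> span ?Z"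
    using card_eq_dim[OF ZC cardZ] indep by simp
  have "phi \<in> span ?Z" using phi_Cy spanZ by blast
  then obtain cc where cc: "phi = (\<Sum>x\<in>?Z. cc x *\<^sub>R x)"
    using span_finite[of ?Z] by auto
  define c where "c i = cc (z i)" for i
  have phisum: "phi = (\<Sum>i\<le>d. c i *\<^sub>R z i)"
    using cc sum.reindex[OF zinj, of "\<lambda>x. cc x *\<^sub>R x"] by (simp add: c_def)
  have phiw: "phi $ w = (\<Sum>i\<le>d. c i * z i $ w)" for w
    by (subst phisum) simp
  have KF: "gdist adj u w + gdist adj v w = d \<and> gdist adj u w \<le> d" for w
  proof -
    have "(\<Sum>i\<le>d. c i * z i $ w) \<noteq> 0" using phi_pos[of w] phiw[of w] by simp
    then obtain i where "i \<le> d" "c i * z i $ w \<noteq> 0" by (metis (mono_tags, lifting) atMost_iff sum.neutral)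
    then have "gdist adj u w = i \<and> gdist adj v w = d - i" using zsupp by auto
    then show ?thesis using \<open>i \<le> d\<close> by simp
  qed
  have single: "phi $ w = c i * z i $ w" if "i \<le> d" "gdist adj u w = i" for i w
  proof -
    have "(\<Sum>j\<le>d. c j * z j $ w) = (\<Sum>j\<le>d. if j = i then c i * z i $ w else 0)"
    proof (rule sum.cong)
      fix j assume "j \<in> {..d}"
      show "c j * z j $ w = (if j = i then c i * z i $ w else 0)"
      proof (cases "j = i")
        case False
        have "z j $ w = 0"
        proof (rule ccontr)
          assume "z j $ w \<noteq> 0"
          then have "gdist adj u w = j" using zsupp \<open>j \<in> {..d}\<close> by auto
          then show False using that False by simp
        qed
        then show ?thesis using False by simp
      qed simp
    qed simp
    also have "\<dots> = c i * z i $ w" using that by (simp add: sum.delta')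
    finally show ?thesis using phiw by simp
  qed
  have ci: "c i \<noteq> 0" if ii: "i \<le> d" for i
  proof -
    obtain w where w: "gdist adj u w = i" using dist_exists ii d_def by blast
    then show ?thesis using single[OF ii w] phi_pos[of w] by auto
  qed
  have fz: "fcl u i = c i *\<^sub>R z i" if "i \<le> d" for i
  proof (subst vec_eq_iff, intro allI)
    fix w
    show "fcl u i $ w = (c i *\<^sub>R z i) $ w"
    proof (cases "gdist adj u w = i")
      case True then show ?thesis using single[OF that True] by (simp add: fcl_def)
    next
      case False
      have "z i $ w = 0" using zsupp[of i w] that False by auto
      then show ?thesis using False by (simp add: fcl_def)
    qed
  qed
  define R where "R = {y::real^'n. \<forall>w w'. gdist adj u w = gdist adj u w' \<longrightarrow> y $ w * phi $ w' = y $ w' * phi $ w}"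
  have sR: "subspace R" unfolding subspace_def R_def by (simp add: algebra_simps)
  have zR: "z i \<in> R" if "i \<le> d" for i
    unfolding R_def mem_Collect_eq
  proof (intro allI impI)
    fix w w' assume ww: "gdist adj u w = gdist adj u w'"
    show "z i $ w * phi $ w' = z i $ w' * phi $ w"
    proof (cases "gdist adj u w = i")
      case True
      then have "phi $ w = c i * z i $ w" "phi $ w' = c i * z i $ w'" using single that ww by auto
      then show ?thesis by (simp add: algebra_simps)
    next
      case False
      then have "z i $ w = 0" "z i $ w' = 0" using zsupp[of i w] zsupp[of i w'] that ww by auto
      then show ?thesis by simp
    qed
  qed
  have CR: "Cy (evec u) \<subseteq> R"
  proof -
    have "span ?Z \<subseteq> R" by (rule span_minimal) (use zR sR in auto)
    then show ?thesis using spanZ by blast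
  qed
  have fC: "fcl u j \<in> Cy (evec u)" if "j \<le> d" for j
  proof -
    have "z j \<in> Cy (evec u)" using ZC that by blast
    then show ?thesis unfolding fz[OF that] by (rule span_scale)
  qed
  have pe: "pseudo_equitable adj (distance_partition adj u)"
    unfolding pseudo_equitable_def
  proof (intro conjI ballI)
    show "is_partition (distance_partition adj u)" by (rule dp_partition)
    fix C C' x x' assume C: "C \<in> distance_partition adj u" and C': "C' \<in> distance_partition adj u"
      and x: "x \<in> C'" and x': "x' \<in> C'"
    obtain j where j: "j \<le> d" "C = Gam u j" using C by (auto simp: dp_eq d_def)
    obtain k where k: "k \<le> d" "C' = Gam u k" using C' by (auto simp: dp_eq d_def)
    have "AA *v fcl u j \<in> R" using Cy_inv[OF fC[OF j(1)]] CR by blast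
    then have "(AA *v fcl u j) $ x * phi $ x' = (AA *v fcl u j) $ x' * phi $ x"
      using x x' k unfolding R_def by auto
    then have "phi $ x * (\<Sum>y\<in>C. scaled_adj adj x y) * phi $ x' = phi $ x' * (\<Sum>y\<in>C. scaled_adj adj x' y) * phi $ x"
      using Afcl[of u j x] Afcl[of u j x'] j(2) by simp
    then show "(\<Sum>y\<in>C. scaled_adj adj x y) = (\<Sum>y\<in>C. scaled_adj adj x' y)"
      using phi_pos[of x] phi_pos[of x'] by (simp add: algebra_simps)
  qed
  have eccv2: "ecc adj v = d"
  proof -
    obtain w where "gdist adj v w = ecc adj v" using ecc_attained by blast
    then have "ecc adj v \<le> d" using KF[of w] by linarith
    then show ?thesis using eccv by simp
  qed
  have GG: "Gam u i = Gam v (d - i)" if "i \<le> d" for i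
  proof (intro set_eqI)
    fix w
    have "gdist adj u w + gdist adj v w = d" using KF[of w] by blast
    then show "w \<in> Gam u i \<longleftrightarrow> w \<in> Gam v (d - i)" using that by auto
  qed
  have dpuv: "distance_partition adj u = distance_partition adj v"
  proof -
    have "(\<lambda>i. Gam u i) ` {..d} = (\<lambda>i. Gam v i) ` {..d}"
    proof
      show "(\<lambda>i. Gam u i) ` {..d} \<subseteq> (\<lambda>i. Gam v i) ` {..d}"
      proof
        fix C assume "C \<in> (\<lambda>i. Gam u i) ` {..d}"
        then obtain i where i: "i \<le> d" "C = Gam u i" by auto
        then have "C = Gam v (d - i)" using GG by simp
        then show "C \<in> (\<lambda>i. Gam v i) ` {..d}" by auto
      qed
      show "(\<lambda>i. Gam v i) ` {..d} \<subseteq> (\<lambda>i. Gam u i) ` {..d}"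
      proof
        fix C assume "C \<in> (\<lambda>i. Gam v i) ` {..d}"
        then obtain i where i: "i \<le> d" "C = Gam v i" by auto
        then have "C = Gam u (d - i)" using GG[of "d - i"] by simp
        then show "C \<in> (\<lambda>i. Gam u i) ` {..d}" by auto
      qed
    qed
    then show ?thesis by (simp add: dp_eq d_def eccv2)
  qed
  have su: "{u} \<in> distance_partition adj u"
  proof -
    have g: "Gam u 0 = {u}" by (auto simp: gdist_0)
    have "Gam u 0 \<in> (\<lambda>i. Gam u i) ` {..ecc adj u}" by (rule imageI) simp
    then show ?thesis unfolding dp_eq g .
  qed
  have sv: "{v} \<in> distance_partition adj u"
  proof -
    have g: "Gam v 0 = {v}" by (auto simp: gdist_0)
    have "Gam v 0 \<in> (\<lambda>i. Gam v i) ` {..ecc adj v}" by (rule imageI) simp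
    then have "{v} \<in> distance_partition adj v" unfolding dp_eq g .
    then show ?thesis using dpuv by simp
  qed
  show ?thesis unfolding antipodal_def
  proof (intro conjI exI[of _ "distance_partition adj u"])
    show "pseudo_equitable adj (distance_partition adj u)" by (rule pe)
    show "distance_partition adj u = distance_partition adj v" by (rule dpuv)
    show "{u} \<in> distance_partition adj u" by (rule su)
    show "{v} \<in> distance_partition adj u" by (rule sv)
    show "gdist adj u v = ecc adj u" by (rule duv)
    show "cospectral adj u v" by (rule sc_cospec[OF sc])
  qed simp
qed

end

theorem theorem3p3:
  fixes adj :: "'n::finite \<Rightarrow> 'n \<Rightarrow> bool" and u v :: 'n
  assumes "simple_graph adj" and "connected_graph adj"
  shows "(antipodal adj u v \<longrightarrow>
            spectrally_extremal adj u \<and> spectrally_extremal adj v \<and>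
            strongly_cospectral adj u v)
       \<and> (spectrally_extremal adj u \<and> strongly_cospectral adj u v \<and>
            gdist adj u v = ecc adj u \<longrightarrow> antipodal adj u v)"
proof -
  interpret sg adj using assms by (rule sg.intro)
  show ?thesis
  proof (rule conjI; rule impI)
    assume "antipodal adj u v"
    then show "spectrally_extremal adj u \<and> spectrally_extremal adj v \<and> strongly_cospectral adj u v"
      by (rule dir1)
  next
    assume h: "spectrally_extremal adj u \<and> strongly_cospectral adj u v \<and> gdist adj u v = ecc adj u"
    then show "antipodal adj u v" using dir2 by blast
  qed
qed

end
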